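(* For every density operator $\rho$ on $\mathbb{C}^d$, $$\frac1d\le C_{\mathcal{F}}(\rho)\le\lambda_{\max}\le 1,$$ where $\lambda_{\max}$ is the largest eigenvalue of $\rho$. Moreover $C_{\mathcal{F}}(\rho)=1$ if and only if $\rho$ is (the projector onto) a maximally coherent state, and if $\rho$ is incoherent then $C_{\mathcal{F}}(\rho)=1/d$.
   Context: Fix the computational basis $\{|i\rangle\}_{i=0}^{d-1}$ of $\mathbb{C}^d$ as the incoherent basis; a state is incoherent if it is diagonal in this basis. A maximally coherent state is a pure state of the form $\frac1{\sqrt d}\sum_{i}e^{\mathrm{i}\theta_i}|i\rangle$ with real $\theta_i$. The quantum coherence fraction is $C_{\mathcal{F}}(\rho)=\max_{|\phi\rangle\text{ maximally coherent}}\langle\phi|\rho|\phi\rangle$. *)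

theory Defs
  imports "Jordan_Normal_Form.Schur_Decomposition"
begin

definition mat_trace :: "complex mat \<Rightarrow> complex" where
  "mat_trace A = (\<Sum>i<dim_row A. A $$ (i, i))"

definition hermitian_mat :: "complex mat \<Rightarrow> bool" where
  "hermitian_mat A \<longleftrightarrow> mat_adjoint A = A"

definition expval :: "complex mat \<Rightarrow> complex vec \<Rightarrow> complex" where
  "expval A v = scalar_prod (conjugate v) (A *\<^sub>v v)"

definition psd_mat :: "nat \<Rightarrow> complex mat \<Rightarrow> bool" where
  "psd_mat d A \<longleftrightarrow> A \<in> carrier_mat d d \<and> hermitian_mat A \<and>
     (\<forall>v \<in> carrier_vec d. Re (expval A v) \<ge> 0)"

definition density_op :: "nat \<Rightarrow> complex mat \<Rightarrow> bool" where
  "density_op d \<rho> \<longleftrightarrow> psd_mat d \<rho> \<and> mat_trace \<rho> = 1"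

definition incoherent :: "nat \<Rightarrow> complex mat \<Rightarrow> bool" where
  "incoherent d \<rho> \<longleftrightarrow> (\<forall>i<d. \<forall>j<d. i \<noteq> j \<longrightarrow> \<rho> $$ (i, j) = 0)"

definition max_coh_vec :: "nat \<Rightarrow> (nat \<Rightarrow> real) \<Rightarrow> complex vec" where
  "max_coh_vec d \<theta> = vec d (\<lambda>i. cis (\<theta> i) / complex_of_real (sqrt (real d)))"

definition max_coh_states :: "nat \<Rightarrow> complex vec set" where
  "max_coh_states d = range (max_coh_vec d)"

definition proj :: "complex vec \<Rightarrow> complex mat" where
  "proj \<phi> = mat (dim_vec \<phi>) (dim_vec \<phi>) (\<lambda>(i, j). \<phi> $ i * cnj (\<phi> $ j))"

text \<open>Coherence fraction: the maximum (= supremum, attained by compactness) of \<langle>phi|rho|phi\<rangle>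
  over maximally coherent phi; the value is real for Hermitian rho.\<close>
definition coh_fraction :: "nat \<Rightarrow> complex mat \<Rightarrow> real" where
  "coh_fraction d \<rho> = (SUP \<phi> \<in> max_coh_states d. Re (expval \<rho> \<phi>))"

text \<open>Largest eigenvalue (eigenvalues of Hermitian matrices are real).\<close>
definition lambda_max :: "complex mat \<Rightarrow> real" where
  "lambda_max \<rho> = Max (Re ` {k. eigenvalue \<rho> k})"

end

theory Submission
  imports Defs "Jordan_Normal_Form.Spectral_Radius"
begin
definition herm :: "nat \<Rightarrow> complex mat \<Rightarrow> bool" where
  "herm n A \<longleftrightarrow> (\<forall>i<n. \<forall>j<n. A $$ (j,i) = cnj (A $$ (i,j)))"

lemma herm_cnj:
  assumes "herm n A" "i < n" "j < n" shows "cnj (A $$ (i,j)) = A $$ (j,i)"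
proof -
  have "A $$ (j,i) = cnj (A $$ (i,j))" using assms unfolding herm_def by blast
  then show ?thesis by simp
qed

lemma mult_entry:
  assumes "A \<in> carrier_mat n n" "B \<in> carrier_mat n n" "i < n" "j < n"
  shows "(A * B) $$ (i,j) = (\<Sum>k<n. A $$ (i,k) * B $$ (k,j))"
  using assms by (auto simp: scalar_prod_def lessThan_atLeast0 intro!: sum.cong)

lemma expval_sum:
  assumes "A \<in> carrier_mat n n" "v \<in> carrier_vec n"
  shows "expval A v = (\<Sum>i<n. cnj (v$i) * (\<Sum>j<n. A $$ (i,j) * v$j))"
  using assms by (auto simp: expval_def scalar_prod_def lessThan_atLeast0 intro!: sum.cong)

lemma expval_sum2:
  assumes "A \<in> carrier_mat n n" "v \<in> carrier_vec n"
  shows "expval A v = (\<Sum>i<n. \<Sum>j<n. cnj (v$i) * A $$ (i,j) * v$j)"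
  unfolding expval_sum[OF assms] by (simp add: sum_distrib_left mult.assoc)

lemma herm_of_hermitian:
  assumes "A \<in> carrier_mat n n" "hermitian_mat A" shows "herm n A"
proof -
  have adj: "mat_adjoint A $$ (i,j) = cnj (A $$ (j,i))" if "i<n" "j<n" for i j
    using assms that by (simp add: mat_adjoint_def mat_of_rows_index)
  show ?thesis unfolding herm_def
  proof (intro allI impI)
    fix i j assume ij: "i<n" "j<n"
    have "A $$ (i,j) = cnj (A $$ (j,i))" using adj[OF ij] assms(2) unfolding hermitian_mat_def by simp
    then show "A $$ (j,i) = cnj (A $$ (i,j))" by simp
  qed
qed

lemma expval_real:
  assumes A: "A \<in> carrier_mat n n" and h: "herm n A" and v: "v \<in> carrier_vec n"
  shows "cnj (expval A v) = expval A v"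
proof -
  have "cnj (expval A v) = (\<Sum>i<n. \<Sum>j<n. cnj (cnj (v$i) * A $$ (i,j) * v$j))"
    unfolding expval_sum2[OF A v] cnj_sum ..
  also have "\<dots> = (\<Sum>i<n. \<Sum>j<n. v$i * A $$ (j,i) * cnj (v$j))"
    by (intro sum.cong refl) (simp add: herm_cnj[OF h])
  also have "\<dots> = (\<Sum>j<n. \<Sum>i<n. v$i * A $$ (j,i) * cnj (v$j))" by (rule sum.swap)
  also have "\<dots> = (\<Sum>j<n. \<Sum>i<n. cnj (v$j) * A $$ (j,i) * v$i)"
    by (intro sum.cong refl) (simp add: algebra_simps)
  also have "\<dots> = expval A v" unfolding expval_sum2[OF A v] ..
  finally show ?thesis .
qed

lemma expval_Im:
  assumes "A \<in> carrier_mat n n" "herm n A" "v \<in> carrier_vec n"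
  shows "expval A v = complex_of_real (Re (expval A v))"
  using expval_real[OF assms] by (simp add: complex_eq_iff)

lemma cmod_diff_sq:
  "(cmod (a - complex_of_real y * b))^2 = (cmod a)^2 - 2*y*Re (cnj b * a) + y^2 * (cmod b)^2"
  unfolding cmod_power2 by (simp add: power2_eq_square algebra_simps)

lemma sq_le_expval_sq:
  assumes M: "M \<in> carrier_mat n n" and h: "herm n M" and v: "v \<in> carrier_vec n"
    and unit: "(\<Sum>i<n. (cmod (v$i))^2) = 1"
  shows "(Re (expval M v))^2 \<le> Re (expval (M*M) v)"
proof -
  define w where "w k = (\<Sum>j<n. M $$ (k,j) * v$j)" for k
  define y where "y = Re (expval M v)"
  have ey: "expval M v = complex_of_real y" using expval_Im[OF M h v] y_def by simp
  have e1: "expval M v = (\<Sum>k<n. cnj (v$k) * w k)" unfolding expval_sum[OF M v] w_def ..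
  have "expval (M*M) v = (\<Sum>i<n. cnj (v$i) * (\<Sum>j<n. (\<Sum>k<n. M $$ (i,k) * M $$ (k,j)) * v$j))"
    unfolding expval_sum[OF mult_carrier_mat[OF M M] v]
    by (intro sum.cong refl arg_cong2[where f="(*)"]) (simp_all del: index_mult_mat add: mult_entry[OF M M])
  also have "\<dots> = (\<Sum>i<n. \<Sum>k<n. cnj (v$i) * M $$ (i,k) * w k)"
  proof (rule sum.cong[OF refl])
    fix i assume i: "i \<in> lessThan n"
    have "(\<Sum>j<n. (\<Sum>k<n. M $$ (i,k) * M $$ (k,j)) * v$j) = (\<Sum>j<n. \<Sum>k<n. M $$ (i,k) * (M $$ (k,j) * v$j))"
      by (simp add: sum_distrib_right mult.assoc)
    also have "\<dots> = (\<Sum>k<n. \<Sum>j<n. M $$ (i,k) * (M $$ (k,j) * v$j))" by (rule sum.swap)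
    also have "\<dots> = (\<Sum>k<n. M $$ (i,k) * w k)" by (simp add: w_def sum_distrib_left)
    finally show "cnj (v$i) * (\<Sum>j<n. (\<Sum>k<n. M $$ (i,k) * M $$ (k,j)) * v$j) = (\<Sum>k<n. cnj (v$i) * M $$ (i,k) * w k)"
      by (simp add: sum_distrib_left mult.assoc)
  qed
  also have "\<dots> = (\<Sum>k<n. \<Sum>i<n. cnj (v$i) * M $$ (i,k) * w k)" by (rule sum.swap)
  also have "\<dots> = (\<Sum>k<n. cnj (w k) * w k)"
  proof (rule sum.cong[OF refl])
    fix k assume k: "k \<in> lessThan n"
    have "cnj (w k) = (\<Sum>i<n. cnj (v$i) * M $$ (i,k))"
      unfolding w_def using h k by (simp add: herm_cnj mult.commute)
    then show "(\<Sum>i<n. cnj (v$i) * M $$ (i,k) * w k) = cnj (w k) * w k"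
      by (simp add: sum_distrib_right)
  qed
  finally have e2: "expval (M*M) v = (\<Sum>k<n. cnj (w k) * w k)" .
  have "0 \<le> (\<Sum>k<n. (cmod (w k - complex_of_real y * v$k))^2)" by (simp add: sum_nonneg)
  also have "\<dots> = (\<Sum>k<n. (cmod (w k))^2 - 2*y*Re (cnj (v$k) * w k) + y^2 * (cmod (v$k))^2)"
    by (simp only: cmod_diff_sq)
  also have "\<dots> = (\<Sum>k<n. (cmod (w k))^2) - 2*y*(\<Sum>k<n. Re (cnj (v$k) * w k)) + y^2 * (\<Sum>k<n. (cmod (v$k))^2)"
    by (simp only: sum.distrib sum_subtractf sum_distrib_left)
  also have "(\<Sum>k<n. Re (cnj (v$k) * w k)) = Re (\<Sum>k<n. cnj (v$k) * w k)" by (simp only: Re_sum)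
  also have "(\<Sum>k<n. (cmod (w k))^2) = Re (expval (M*M) v)"
    unfolding e2 Re_sum cmod_power2 by (intro sum.cong refl) (simp add: power2_eq_square)
  also have "Re (\<Sum>k<n. cnj (v$k) * w k) = y" using e1 ey by (metis Re_complex_of_real)
  finally show ?thesis using unit y_def by (simp add: power2_eq_square)
qed

lemma pow_mat_Suc_left:
  assumes "A \<in> carrier_mat n n" shows "A ^\<^sub>m Suc k = A * A ^\<^sub>m k"
proof (induction k)
  case 0 then show ?case using assms by simp
next
  case (Suc k)
  have "A ^\<^sub>m Suc (Suc k) = (A * A ^\<^sub>m k) * A" using Suc by simp
  also have "\<dots> = A * (A ^\<^sub>m k * A)" using assms by (simp add: assoc_mult_mat[of _ n n _ n _ n])
  finally show ?case by simp
qed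

lemma pow_mat_add:
  assumes "A \<in> carrier_mat n n" shows "A ^\<^sub>m (k + m) = A ^\<^sub>m k * A ^\<^sub>m m"
proof (induction m)
  case 0 then show ?case using assms by simp
next
  case (Suc m)
  have "A ^\<^sub>m (k + Suc m) = (A ^\<^sub>m k * A ^\<^sub>m m) * A" using Suc by simp
  also have "\<dots> = A ^\<^sub>m k * (A ^\<^sub>m m * A)" using assms by (simp add: assoc_mult_mat[of _ n n _ n _ n])
  finally show ?case by simp
qed

lemma herm_mult_comm:
  assumes A: "A \<in> carrier_mat n n" and B: "B \<in> carrier_mat n n" and hA: "herm n A" and hB: "herm n B"
    and c: "A * B = B * A"
  shows "herm n (A * B)"
  unfolding herm_def
proof (intro allI impI)
  fix i j assume ij: "i<n" "j<n"
  have "(A*B) $$ (j,i) = (\<Sum>k<n. A $$ (j,k) * B $$ (k,i))" using A B ij by (simp del: index_mult_mat add: mult_entry[OF A B] mult_entry[OF B A])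
  also have "\<dots> = cnj (\<Sum>k<n. B $$ (i,k) * A $$ (k,j))"
    using hA hB ij by (auto simp: herm_cnj mult.commute intro!: sum.cong)
  also have "\<dots> = cnj ((B*A) $$ (i,j))" using A B ij by (simp del: index_mult_mat add: mult_entry[OF A B] mult_entry[OF B A])
  finally show "(A*B) $$ (j,i) = cnj ((A*B) $$ (i,j))" using c by simp
qed

lemma herm_pow:
  assumes A: "A \<in> carrier_mat n n" and h: "herm n A" shows "herm n (A ^\<^sub>m k)"
proof (induction k)
  case 0 then show ?case using A by (auto simp: herm_def)
next
  case (Suc k)
  have "A ^\<^sub>m Suc k = A ^\<^sub>m k * A" by simp
  moreover have "A ^\<^sub>m k * A = A * A ^\<^sub>m k" using pow_mat_Suc_left[OF A, of k] by simp
  ultimately show ?case using herm_mult_comm[OF pow_carrier_mat[OF A] A Suc h] by simp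
qed

lemma cnj_mult_self: "cnj z * z = complex_of_real ((cmod z)^2)"
  by (metis complex_norm_square mult.commute)

lemma vec_norm_sq:
  assumes "v \<in> carrier_vec n"
  shows "conjugate v \<bullet> v = complex_of_real (\<Sum>i<n. (cmod (v$i))^2)"
  using assms by (simp add: scalar_prod_def lessThan_atLeast0 cnj_mult_self)

lemma vec_norm_sq_pos:
  assumes "v \<in> carrier_vec n" "v \<noteq> 0\<^sub>v n"
  shows "(\<Sum>i<n. (cmod (v$i))^2) > 0"
proof -
  obtain i where i: "i < n" "v$i \<noteq> 0" using assms by (metis eq_vecI carrier_vecD index_zero_vec)
  have "0 < (cmod (v$i))^2" using i by simp
  also have "\<dots> \<le> (\<Sum>i<n. (cmod (v$i))^2)"
    by (rule member_le_sum) (use i in auto)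
  finally show ?thesis .
qed

lemma density_basic:
  assumes "density_op d \<rho>"
  shows "\<rho> \<in> carrier_mat d d" "herm d \<rho>" "\<And>v. v \<in> carrier_vec d \<Longrightarrow> Re (expval \<rho> v) \<ge> 0"
    "mat_trace \<rho> = 1" "(\<Sum>i<d. \<rho> $$ (i,i)) = 1" "d > 0"
proof -
  show c: "\<rho> \<in> carrier_mat d d" using assms by (simp add: density_op_def psd_mat_def)
  show "herm d \<rho>" using assms c herm_of_hermitian by (simp add: density_op_def psd_mat_def)
  show "\<And>v. v \<in> carrier_vec d \<Longrightarrow> Re (expval \<rho> v) \<ge> 0" using assms by (simp add: density_op_def psd_mat_def)
  show t: "mat_trace \<rho> = 1" using assms by (simp add: density_op_def)
  show t2: "(\<Sum>i<d. \<rho> $$ (i,i)) = 1" using t c by (simp add: mat_trace_def)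
  show "d > 0" using t2 by (cases d) auto
qed

lemma eigen_real_nonneg:
  assumes dens: "density_op d \<rho>" and ev: "eigenvalue \<rho> k"
  shows "k = complex_of_real (Re k)" "Re k \<ge> 0"
proof -
  note db = density_basic[OF dens]
  obtain v where v: "v \<in> carrier_vec d" "v \<noteq> 0\<^sub>v d" "\<rho> *\<^sub>v v = k \<cdot>\<^sub>v v"
    using ev db(1) unfolding eigenvalue_def eigenvector_def by auto
  define s where "s = (\<Sum>i<d. (cmod (v$i))^2)"
  have s: "s > 0" using vec_norm_sq_pos[OF v(1,2)] s_def by simp
  have "expval \<rho> v = k * complex_of_real s"
    unfolding expval_def v(3) using v(1) by (simp add: vec_norm_sq s_def)
  moreover have "expval \<rho> v = complex_of_real (Re (expval \<rho> v))" by (rule expval_Im[OF db(1,2) v(1)])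
  ultimately have kk: "k = complex_of_real (Re (expval \<rho> v) / s)" using s
    by (metis divide_eq_eq_1 mult.commute nonzero_eq_divide_eq of_real_divide of_real_eq_0_iff less_irrefl)
  then show "k = complex_of_real (Re k)" by (metis Re_complex_of_real)
  show "Re k \<ge> 0" using kk s db(3)[OF v(1)] by simp
qed

lemma trace_comm:
  fixes A B :: "complex mat"
  assumes "A \<in> carrier_mat n m" "B \<in> carrier_mat m n"
  shows "(\<Sum>i<n. (A*B) $$ (i,i)) = (\<Sum>j<m. (B*A) $$ (j,j))"
proof -
  have "(\<Sum>i<n. (A*B) $$ (i,i)) = (\<Sum>i<n. \<Sum>j<m. A $$ (i,j) * B $$ (j,i))"
    using assms by (intro sum.cong refl) (simp add: scalar_prod_def lessThan_atLeast0)
  also have "\<dots> = (\<Sum>j<m. \<Sum>i<n. A $$ (i,j) * B $$ (j,i))" by (rule sum.swap)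
  also have "\<dots> = (\<Sum>j<m. (B*A) $$ (j,j))"
    using assms by (intro sum.cong refl) (auto simp: scalar_prod_def lessThan_atLeast0 mult.commute intro!: sum.cong)
  finally show ?thesis .
qed

lemma trace_similar:
  fixes A B :: "complex mat"
  assumes "similar_mat_wit A B P Q" "A \<in> carrier_mat n n"
  shows "(\<Sum>i<n. A $$ (i,i)) = (\<Sum>i<n. B $$ (i,i))"
proof -
  from assms have c: "B \<in> carrier_mat n n" "P \<in> carrier_mat n n" "Q \<in> carrier_mat n n"
    and QP: "Q * P = 1\<^sub>m n" and A: "A = P * B * Q"
    unfolding similar_mat_wit_def Let_def by auto
  have "A = P * (B * Q)" using A c by (simp add: assoc_mult_mat[of _ n n _ n _ n])
  then have "(\<Sum>i<n. A $$ (i,i)) = (\<Sum>i<n. ((B * Q) * P) $$ (i,i))"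
    using trace_comm[of P n n "B*Q"] c by simp
  also have "(B * Q) * P = B" using c QP by (simp add: assoc_mult_mat[of _ n n _ n _ n])
  finally show ?thesis .
qed

lemma upper_tri_sq_diag:
  fixes B :: "complex mat"
  assumes "B \<in> carrier_mat n n" "upper_triangular B" "i < n"
  shows "(B * B) $$ (i,i) = (B $$ (i,i))^2"
proof -
  have "(B * B) $$ (i,i) = (\<Sum>k<n. B $$ (i,k) * B $$ (k,i))" by (rule mult_entry[OF assms(1,1,3,3)])
  also have "\<dots> = (\<Sum>k\<in>{i}. B $$ (i,k) * B $$ (k,i))"
  proof (rule sum.mono_neutral_right)
    show "\<forall>k\<in>{..<n} - {i}. B $$ (i,k) * B $$ (k,i) = 0"
    proof
      fix k assume k: "k \<in> {..<n} - {i}"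
      show "B $$ (i,k) * B $$ (k,i) = 0"
      proof (cases "k < i")
        case True then show ?thesis using assms k by (auto simp: upper_triangular_def)
      next
        case False then have "i < k" using k by auto
        then show ?thesis using assms k by (auto simp: upper_triangular_def)
      qed
    qed
  qed (use assms in auto)
  finally show ?thesis by (simp add: power2_eq_square)
qed

lemma pow2_mat: "A \<in> carrier_mat n n \<Longrightarrow> A ^\<^sub>m 2 = A * A"
  by (simp add: numeral_2_eq_2)

lemma spec_facts:
  assumes dens: "density_op d \<rho>"
  obtains b :: "nat \<Rightarrow> complex" where
    "\<And>k. eigenvalue \<rho> k \<longleftrightarrow> (\<exists>i<d. k = b i)"
    "\<And>i. i<d \<Longrightarrow> b i = complex_of_real (Re (b i))"
    "\<And>i. i<d \<Longrightarrow> Re (b i) \<ge> 0"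
    "(\<Sum>i<d. b i) = 1"
    "(\<Sum>i<d. (b i)^2) = (\<Sum>i<d. (\<rho>*\<rho>) $$ (i,i))"
proof -
  note db = density_basic[OF dens]
  obtain es where es: "char_poly \<rho> = (\<Prod>a\<leftarrow>es. [:- a, 1:])" using char_poly_factorized[OF db(1)] by auto
  obtain B P Q where sd: "schur_decomposition \<rho> es = (B,P,Q)" by (cases "schur_decomposition \<rho> es") auto
  from schur_decomposition[OF db(1) es sd] have sim: "similar_mat_wit \<rho> B P Q"
    and ut: "upper_triangular B" and dg: "diag_mat B = es" by auto
  have B: "B \<in> carrier_mat d d" using sim db(1) unfolding similar_mat_wit_def Let_def by auto
  define b where "b i = B $$ (i,i)" for i
  have ev: "eigenvalue \<rho> k \<longleftrightarrow> (\<exists>i<d. k = b i)" for k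
  proof -
    have "eigenvalue \<rho> k \<longleftrightarrow> poly (char_poly \<rho>) k = 0" by (rule eigenvalue_root_char_poly[OF db(1)])
    also have "\<dots> \<longleftrightarrow> (\<exists>a \<in> set es. k = a)" unfolding es poly_prod_list
      by (auto simp: prod_list_zero_iff)
    also have "\<dots> \<longleftrightarrow> (\<exists>i<d. k = b i)" unfolding dg[symmetric] diag_mat_def b_def using B by auto
    finally show ?thesis .
  qed
  have r: "b i = complex_of_real (Re (b i))" "Re (b i) \<ge> 0" if "i<d" for i
    using eigen_real_nonneg[OF dens] ev that by blast+
  have t: "(\<Sum>i<d. b i) = 1" using trace_similar[OF sim db(1)] db(5) b_def by simp
  have sim2: "similar_mat_wit (\<rho>*\<rho>) (B*B) P Q"
    using similar_mat_wit_pow[OF sim, of 2] pow2_mat[OF db(1)] pow2_mat[OF B] by simp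
  have "(\<Sum>i<d. (\<rho>*\<rho>) $$ (i,i)) = (\<Sum>i<d. (B*B) $$ (i,i))"
    by (rule trace_similar[OF sim2 mult_carrier_mat[OF db(1) db(1)]])
  also have "\<dots> = (\<Sum>i<d. (b i)^2)" using upper_tri_sq_diag[OF B ut] b_def by simp
  finally have t2: "(\<Sum>i<d. (b i)^2) = (\<Sum>i<d. (\<rho>*\<rho>) $$ (i,i))" by simp
  show ?thesis using that[OF ev r(1) r(2) t t2] by blast
qed

lemma lm_facts:
  assumes dens: "density_op d \<rho>"
  shows "\<And>k. eigenvalue \<rho> k \<Longrightarrow> Re k \<le> lambda_max \<rho>"
    "\<exists>k. eigenvalue \<rho> k \<and> Re k = lambda_max \<rho>"
    "0 \<le> lambda_max \<rho>" "lambda_max \<rho> \<le> 1"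
    "(\<Sum>i<d. \<Sum>j<d. (cmod (\<rho> $$ (i,j)))^2) \<le> 1"
proof -
  note db = density_basic[OF dens]
  obtain b where b1: "\<And>k. eigenvalue \<rho> k \<longleftrightarrow> (\<exists>i<d. k = b i)"
    and b2: "\<And>i. i<d \<Longrightarrow> b i = complex_of_real (Re (b i))"
    and b3: "\<And>i. i<d \<Longrightarrow> Re (b i) \<ge> 0"
    and b4: "(\<Sum>i<d. b i) = 1"
    and b5: "(\<Sum>i<d. (b i)^2) = (\<Sum>i<d. (\<rho>*\<rho>) $$ (i,i))"
    using spec_facts[OF dens] by blast
  note b = b1 b2 b3 b4 b5
  have S: "Re ` {k. eigenvalue \<rho> k} = (\<lambda>i. Re (b i)) ` {..<d}" using b(1) by auto
  have fin: "finite (Re ` {k. eigenvalue \<rho> k})" unfolding S by simp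
  have ne: "Re ` {k. eigenvalue \<rho> k} \<noteq> {}" unfolding S using db(6) by auto
  have lm: "lambda_max \<rho> = Max (Re ` {k. eigenvalue \<rho> k})" by (simp add: lambda_max_def)
  show le: "\<And>k. eigenvalue \<rho> k \<Longrightarrow> Re k \<le> lambda_max \<rho>" unfolding lm using fin by auto
  have "lambda_max \<rho> \<in> Re ` {k. eigenvalue \<rho> k}" unfolding lm using fin ne by (rule Max_in)
  then show "\<exists>k. eigenvalue \<rho> k \<and> Re k = lambda_max \<rho>" by auto
  then obtain i where i: "i < d" "lambda_max \<rho> = Re (b i)" using b(1) by auto
  show "0 \<le> lambda_max \<rho>" using i b(3) by simp
  have sumRe: "(\<Sum>i<d. Re (b i)) = 1" using b(4) by (metis Re_sum one_complex.simps(1))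
  have bi1: "Re (b j) \<le> 1" if "j < d" for j
  proof -
    have "Re (b j) \<le> (\<Sum>i<d. Re (b i))" by (rule member_le_sum) (use b(3) that in auto)
    then show ?thesis using sumRe by simp
  qed
  show "lambda_max \<rho> \<le> 1" using i bi1 by simp
  have rr: "(\<rho>*\<rho>) $$ (i,i) = complex_of_real (\<Sum>j<d. (cmod (\<rho> $$ (i,j)))^2)" if "i<d" for i
  proof -
    have "(\<rho>*\<rho>) $$ (i,i) = (\<Sum>j<d. \<rho> $$ (i,j) * \<rho> $$ (j,i))" by (rule mult_entry[OF db(1) db(1) that that])
    also have "\<dots> = (\<Sum>j<d. complex_of_real ((cmod (\<rho> $$ (i,j)))^2))"
    proof (rule sum.cong[OF refl])
      fix j assume "j \<in> {..<d}"
      then have "\<rho> $$ (j,i) = cnj (\<rho> $$ (i,j))" using herm_cnj[OF db(2) that, of j] by simp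
      then show "\<rho> $$ (i,j) * \<rho> $$ (j,i) = complex_of_real ((cmod (\<rho> $$ (i,j)))^2)"
        using complex_norm_square[of "\<rho> $$ (i,j)"] by simp
    qed
    finally show ?thesis by simp
  qed
  have "complex_of_real (\<Sum>i<d. \<Sum>j<d. (cmod (\<rho> $$ (i,j)))^2) = (\<Sum>i<d. (\<rho>*\<rho>) $$ (i,i))"
    using rr by simp
  also have "\<dots> = (\<Sum>i<d. (b i)^2)" using b(5) by simp
  also have "\<dots> = complex_of_real (\<Sum>i<d. (Re (b i))^2)"
  proof -
    have "(\<Sum>i<d. (b i)^2) = (\<Sum>i<d. complex_of_real ((Re (b i))^2))"
      by (rule sum.cong[OF refl]) (metis b(2) lessThan_iff of_real_power)
    then show ?thesis by simp
  qed
  finally have "(\<Sum>i<d. \<Sum>j<d. (cmod (\<rho> $$ (i,j)))^2) = (\<Sum>i<d. (Re (b i))^2)"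
    using of_real_eq_iff by blast
  also have "\<dots> \<le> (\<Sum>i<d. Re (b i))"
  proof (rule sum_mono)
    fix j assume "j \<in> {..<d}"
    then have "0 \<le> Re (b j)" "Re (b j) \<le> 1" using b(3) bi1 by auto
    then show "(Re (b j))^2 \<le> Re (b j)" by (simp add: power2_eq_square mult_left_le)
  qed
  finally show "(\<Sum>i<d. \<Sum>j<d. (cmod (\<rho> $$ (i,j)))^2) \<le> 1" using sumRe by simp
qed

lemma smult_mat_vec:
  assumes "A \<in> carrier_mat n n" "v \<in> carrier_vec n"
  shows "((c::complex) \<cdot>\<^sub>m A) *\<^sub>v v = c \<cdot>\<^sub>v (A *\<^sub>v v)"
  by (rule eq_vecI) (use assms in \<open>auto simp: scalar_prod_def sum_distrib_left mult.assoc\<close>)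

lemma smult_pow:
  assumes A: "A \<in> carrier_mat n n"
  shows "((c::complex) \<cdot>\<^sub>m A) ^\<^sub>m k = c^k \<cdot>\<^sub>m (A ^\<^sub>m k)"
proof (induction k)
  case 0 then show ?case using A by (auto intro!: eq_matI)
next
  case (Suc k)
  have "(c \<cdot>\<^sub>m A) ^\<^sub>m Suc k = (c^k \<cdot>\<^sub>m (A ^\<^sub>m k)) * (c \<cdot>\<^sub>m A)" using Suc by simp
  also have "\<dots> = c^(Suc k) \<cdot>\<^sub>m (A ^\<^sub>m k * A)"
    by (rule eq_matI) (use A in \<open>auto simp: scalar_prod_def sum_distrib_left ac_simps\<close>)
  finally show ?case by simp
qed

lemma expval_bound:
  assumes M: "M \<in> carrier_mat n n" and v: "v \<in> carrier_vec n"
    and vb: "\<And>i. i < n \<Longrightarrow> cmod (v$i) \<le> 1" and Mb: "\<And>i j. i < n \<Longrightarrow> j < n \<Longrightarrow> cmod (M $$ (i,j)) \<le> B"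
  shows "cmod (expval M v) \<le> real n * real n * B"
proof -
  have "cmod (expval M v) \<le> (\<Sum>i<n. \<Sum>j<n. cmod (cnj (v$i) * M $$ (i,j) * v$j))"
    unfolding expval_sum2[OF M v] by (rule order.trans[OF norm_sum sum_mono]) (rule norm_sum)
  also have "\<dots> \<le> (\<Sum>i<n. \<Sum>j<n. B)"
  proof (intro sum_mono)
    fix i j assume ij: "i \<in> {..<n}" "j \<in> {..<n}"
    have "cmod (cnj (v$i) * M $$ (i,j) * v$j) = cmod (v$i) * cmod (M $$ (i,j)) * cmod (v$j)"
      by (simp add: norm_mult)
    also have "\<dots> \<le> 1 * B * 1"
      using ij vb Mb by (intro mult_mono) (auto intro: order.trans[OF norm_ge_zero])
    finally show "cmod (cnj (v$i) * M $$ (i,j) * v$j) \<le> B" by simp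
  qed
  also have "\<dots> = real n * real n * B" by simp
  finally show ?thesis .
qed

lemma rayleigh:
  assumes dens: "density_op d \<rho>" and v: "v \<in> carrier_vec d"
    and unit: "(\<Sum>i<d. (cmod (v$i))^2) = 1"
  shows "Re (expval \<rho> v) \<le> lambda_max \<rho>"
proof (rule ccontr)
  note db = density_basic[OF dens]
  note lf = lm_facts[OF dens]
  define lm where "lm = lambda_max \<rho>"
  define x where "x = Re (expval \<rho> v)"
  assume "\<not> Re (expval \<rho> v) \<le> lambda_max \<rho>"
  then have xl: "x > lm" unfolding x_def lm_def by simp
  have lm0: "lm \<ge> 0" using lf(3) lm_def by simp
  define \<mu> where "\<mu> = (x + lm) / 2"
  have mu: "\<mu> > lm" "\<mu> > 0" "x > \<mu>" using xl lm0 unfolding \<mu>_def by auto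
  define A where "A = complex_of_real (1/\<mu>) \<cdot>\<^sub>m \<rho>"
  have A: "A \<in> carrier_mat d d" using db(1) A_def by simp
  have sr: "spectral_radius A < 1"
  proof -
    obtain k where k: "k \<in> spectrum A" "spectral_radius A = cmod k"
      using spectral_radius_mem_max(1)[OF A db(6)] by auto
    obtain w where w: "w \<in> carrier_vec d" "w \<noteq> 0\<^sub>v d" "A *\<^sub>v w = k \<cdot>\<^sub>v w"
      using k(1) A unfolding spectrum_def eigenvalue_def eigenvector_def by auto
    have "\<rho> *\<^sub>v w = (complex_of_real \<mu> * k) \<cdot>\<^sub>v w"
    proof -
      have "complex_of_real \<mu> \<cdot>\<^sub>v (A *\<^sub>v w) = \<rho> *\<^sub>v w"
        unfolding A_def smult_mat_vec[OF db(1) w(1)] smult_smult_assoc using mu(2)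
        by (simp add: of_real_mult[symmetric] del: of_real_mult)
      then show ?thesis using w(3) smult_smult_assoc by metis
    qed
    then have ev: "eigenvalue \<rho> (complex_of_real \<mu> * k)"
      using w db(1) unfolding eigenvalue_def eigenvector_def by auto
    have r: "complex_of_real \<mu> * k = complex_of_real (Re (complex_of_real \<mu> * k))"
      "Re (complex_of_real \<mu> * k) \<ge> 0" using eigen_real_nonneg[OF dens ev] by auto
    have "Re (complex_of_real \<mu> * k) \<le> lm" using lf(1)[OF ev] lm_def by simp
    moreover have "cmod (complex_of_real \<mu> * k) = Re (complex_of_real \<mu> * k)"
      using r by (metis abs_of_nonneg norm_of_real)
    moreover have "cmod (complex_of_real \<mu> * k) = \<mu> * cmod k" using mu(2) by (simp add: norm_mult)
    ultimately have "\<mu> * cmod k \<le> lm" by linarith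
    then have "\<mu> * cmod k < \<mu>" using mu(1) by simp
    then show ?thesis using k(2) mu(2) by simp
  qed
  obtain c where c: "\<And>N. norm_bound (A ^\<^sub>m N) c"
    using spectral_radius_jnf_norm_bound_less_1_upper_triangular[OF A sr] by auto
  have ent: "cmod ((\<rho> ^\<^sub>m N) $$ (i,j)) \<le> c * \<mu>^N" if ij: "i < d" "j < d" for N i j
  proof -
    have "A ^\<^sub>m N = complex_of_real (1/\<mu>)^N \<cdot>\<^sub>m (\<rho> ^\<^sub>m N)" unfolding A_def by (rule smult_pow[OF db(1)])
    then have "(A ^\<^sub>m N) $$ (i,j) = complex_of_real (1/\<mu>)^N * (\<rho> ^\<^sub>m N) $$ (i,j)"
      using ij db(1) by simp
    moreover have "cmod ((A ^\<^sub>m N) $$ (i,j)) \<le> c" using c[of N] ij A unfolding norm_bound_def by simp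
    ultimately have "(1/\<mu>)^N * cmod ((\<rho> ^\<^sub>m N) $$ (i,j)) \<le> c" using mu(2) by (simp add: norm_mult norm_power norm_divide)
    then show ?thesis using mu(2) by (simp add: field_simps)
  qed
  have vb: "cmod (v$i) \<le> 1" if "i < d" for i
  proof -
    have "(cmod (v$i))^2 \<le> (\<Sum>i<d. (cmod (v$i))^2)" by (rule member_le_sum) (use that in auto)
    then have "(cmod (v$i))^2 \<le> 1^2" using unit by simp
    then show ?thesis by (rule power2_le_imp_le) simp
  qed
  define y where "y k = Re (expval (\<rho> ^\<^sub>m (2^k)) v)" for k
  have x0: "x \<ge> 0" using db(3)[OF v] x_def by simp
  have up: "y k \<le> real d * real d * (c * \<mu>^(2^k))" for k
  proof -
    have "y k \<le> cmod (expval (\<rho> ^\<^sub>m (2^k)) v)" unfolding y_def by (rule complex_Re_le_cmod)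
    also have "\<dots> \<le> real d * real d * (c * \<mu>^(2^k))"
      by (rule expval_bound[OF pow_carrier_mat[OF db(1)] v vb ent])
    finally show ?thesis .
  qed
  have low: "x^(2^k) \<le> y k" for k
  proof (induction k)
    case 0
    have "\<rho> ^\<^sub>m 1 = \<rho>" using db(1) by simp
    then show ?case by (simp add: y_def x_def)
  next
    case (Suc k)
    define M where "M = \<rho> ^\<^sub>m (2^k)"
    have M: "M \<in> carrier_mat d d" "herm d M" using herm_pow[OF db(1,2)] db(1) M_def by auto
    have "\<rho> ^\<^sub>m (2^Suc k) = M * M" unfolding M_def using pow_mat_add[OF db(1), of "2^k" "2^k"] by (simp add: mult_2)
    then have yS: "y (Suc k) = Re (expval (M * M) v)" by (simp add: y_def)
    have "x^(2^Suc k) = (x^(2^k))^2" by (simp add: power_mult[symmetric] mult.commute)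
    also have "\<dots> \<le> (y k)^2" using Suc x0 by (intro power_mono) auto
    also have "y k = Re (expval M v)" by (simp add: y_def M_def)
    also have "(Re (expval M v))^2 \<le> Re (expval (M * M) v)" by (rule sq_le_expval_sq[OF M v unit])
    finally show ?case using yS by simp
  qed
  define q where "q = x / \<mu>"
  have q: "q > 1" using mu unfolding q_def by simp
  have qb: "q^(2^k) \<le> real d * real d * c" for k
  proof -
    have "x^(2^k) \<le> real d * real d * (c * \<mu>^(2^k))" using low[of k] up[of k] by linarith
    then show ?thesis using mu(2) unfolding q_def by (simp add: power_divide field_simps)
  qed
  obtain K where K: "real d * real d * c < q^K" using real_arch_pow[OF q] by blast
  have "q^K \<le> q^(2^K)" using q by (intro power_increasing) (auto intro: less_imp_le less_exp)
  then show False using K qb[of K] by simp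
qed

lemma mcv_carrier: "max_coh_vec d \<theta> \<in> carrier_vec d"
  by (simp add: max_coh_vec_def)

lemma mcv_index: "i < d \<Longrightarrow> max_coh_vec d \<theta> $ i = cis (\<theta> i) / complex_of_real (sqrt (real d))"
  by (simp add: max_coh_vec_def)

lemma mcv_cmod_sq: "d > 0 \<Longrightarrow> i < d \<Longrightarrow> (cmod (max_coh_vec d \<theta> $ i))^2 = 1 / real d"
  by (simp add: mcv_index norm_divide power_divide)

lemma mcv_cmod: "d > 0 \<Longrightarrow> i < d \<Longrightarrow> cmod (max_coh_vec d \<theta> $ i) = 1 / sqrt (real d)"
  by (simp add: mcv_index norm_divide)

lemma mcv_unit: "d > 0 \<Longrightarrow> (\<Sum>i<d. (cmod (max_coh_vec d \<theta> $ i))^2) = 1"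
  by (simp add: mcv_cmod_sq)

lemma mcv_cnj_self: "d > 0 \<Longrightarrow> i < d \<Longrightarrow> cnj (max_coh_vec d \<theta> $ i) * max_coh_vec d \<theta> $ i = complex_of_real (1 / real d)"
  by (simp add: cnj_mult_self mcv_cmod_sq)

lemma cf_bdd:
  assumes "density_op d \<rho>"
  shows "bdd_above ((\<lambda>\<phi>. Re (expval \<rho> \<phi>)) ` max_coh_states d)"
proof (rule bdd_aboveI2)
  fix \<phi> assume "\<phi> \<in> max_coh_states d"
  then obtain \<theta> where "\<phi> = max_coh_vec d \<theta>" by (auto simp: max_coh_states_def)
  then show "Re (expval \<rho> \<phi>) \<le> lambda_max \<rho>"
    using rayleigh[OF assms mcv_carrier mcv_unit] density_basic(6)[OF assms] by simp
qed

lemma cf_upper: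
  assumes "density_op d \<rho>"
  shows "coh_fraction d \<rho> \<le> lambda_max \<rho>"
  unfolding coh_fraction_def
proof (rule cSUP_least)
  show "max_coh_states d \<noteq> {}" by (simp add: max_coh_states_def)
  fix \<phi> assume "\<phi> \<in> max_coh_states d"
  then obtain \<theta> where "\<phi> = max_coh_vec d \<theta>" by (auto simp: max_coh_states_def)
  then show "Re (expval \<rho> \<phi>) \<le> lambda_max \<rho>"
    using rayleigh[OF assms mcv_carrier mcv_unit] density_basic(6)[OF assms] by simp
qed

lemma cf_ge:
  assumes "density_op d \<rho>"
  shows "Re (expval \<rho> (max_coh_vec d \<theta>)) \<le> coh_fraction d \<rho>"
  unfolding coh_fraction_def
  by (rule cSUP_upper[OF _ cf_bdd[OF assms]]) (simp add: max_coh_states_def)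

lemma roots_sum:
  fixes m :: int
  assumes m0: "m \<noteq> 0" and md: "\<bar>m\<bar> < int d"
  shows "(\<Sum>t<d. cis (2*pi*real t*real_of_int m / real d)) = 0"
proof -
  have d0: "d > 0" using md by simp
  define w where "w = cis (2*pi*real_of_int m / real d)"
  have pw: "cis (2*pi*real t*real_of_int m / real d) = w^t" for t
    unfolding w_def DeMoivre by (simp add: mult_ac)
  have wd: "w^d = 1"
  proof -
    have "w^d = cis (2*pi*real_of_int m)" unfolding w_def DeMoivre using d0 by simp
    also have "\<dots> = 1" by (rule cis_multiple_2pi) simp
    finally show ?thesis .
  qed
  have w1: "w \<noteq> 1"
  proof
    assume "w = 1"
    then have "cos (2*pi*real_of_int m / real d) = 1" unfolding w_def by (metis cis.sel(1) one_complex.sel(1))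
    then obtain n :: int where n: "2*pi*real_of_int m / real d = real_of_int n * 2 * pi"
      using cos_one_2pi_int by blast
    then have "real_of_int m = real_of_int n * real d" using d0 by (simp add: field_simps)
    then have mn: "m = n * int d" by (metis of_int_eq_iff of_int_mult of_int_of_nat_eq)
    then have "n \<noteq> 0" using m0 by auto
    then have "\<bar>n\<bar> \<ge> 1" by simp
    then have "\<bar>m\<bar> \<ge> int d" unfolding mn abs_mult by (simp add: mult_le_cancel_right1)
    then show False using md by simp
  qed
  have "(\<Sum>t<d. cis (2*pi*real t*real_of_int m / real d)) = (\<Sum>t<d. w^t)" using pw by simp
  also have "\<dots> = 0" using w1 wd by (simp add: sum_gp_strict)
  finally show ?thesis .
qed

lemma cis_prod: "cnj (cis a / complex_of_real (sqrt (real d))) * (cis b / complex_of_real (sqrt (real d)))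
   = cis (b - a) / complex_of_real (real d)"
proof -
  have 1: "cnj (cis a / complex_of_real (sqrt (real d))) = cis (-a) / complex_of_real (sqrt (real d))"
    unfolding complex_cnj_divide cis_cnj complex_cnj_complex_of_real ..
  have 2: "complex_of_real (sqrt (real d)) * complex_of_real (sqrt (real d)) = complex_of_real (real d)"
  proof -
    have "sqrt (real d) * sqrt (real d) = real d" by simp
    then show ?thesis unfolding of_real_mult[symmetric] by simp
  qed
  have 3: "cis (-a) * cis b = cis (b - a)" unfolding cis_mult by (simp only: diff_conv_add_uminus add.commute)
  show ?thesis unfolding 1 times_divide_times_eq 2 3 ..
qed

lemma inner_roots:
  assumes "i < d" "j < d"
  shows "(\<Sum>t<d. cis (2*pi*real t*real j / real d - 2*pi*real t*real i / real d)) = (if i = j then of_nat d else 0)"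
proof (cases "i = j")
  case True then show ?thesis by simp
next
  case False
  have "(\<Sum>t<d. cis (2*pi*real t*real j / real d - 2*pi*real t*real i / real d))
      = (\<Sum>t<d. cis (2*pi*real t*real_of_int (int j - int i) / real d))"
    by (intro sum.cong refl arg_cong[where f=cis]) (simp add: diff_divide_distrib right_diff_distrib)
  also have "\<dots> = 0" by (rule roots_sum) (use False assms in auto)
  finally show ?thesis using False by simp
qed

lemma cnj_mult_rearr: "cnj a * r * b = r * (cnj a * (b::complex))" by (simp add: mult_ac)

lemma cf_lower:
  assumes dens: "density_op d \<rho>"
  shows "1 / real d \<le> coh_fraction d \<rho>"
proof -
  note db = density_basic[OF dens]
  define D where "D = complex_of_real (real d)"
  define c where "c t i j = cis (2*pi*real t*real j / real d - 2*pi*real t*real i / real d)" for t i j :: nat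
  define \<phi> where "\<phi> t = max_coh_vec d (\<lambda>i. 2*pi*real t*real i / real d)" for t
  have e: "expval \<rho> (\<phi> t) = (\<Sum>i<d. \<Sum>j<d. \<rho> $$ (i,j) / D * c t i j)" for t
    unfolding expval_sum2[OF db(1) mcv_carrier[of d]] \<phi>_def
  proof (intro sum.cong refl)
    fix i j assume "i \<in> {..<d}" "j \<in> {..<d}"
    then have i: "i < d" and j: "j < d" by auto
    have "cnj (max_coh_vec d (\<lambda>i. 2*pi*real t*real i / real d) $ i) * max_coh_vec d (\<lambda>i. 2*pi*real t*real i / real d) $ j
      = c t i j / D"
      unfolding mcv_index[OF i] mcv_index[OF j] c_def D_def by (rule cis_prod)
    then show "cnj (max_coh_vec d (\<lambda>i. 2*pi*real t*real i / real d) $ i) * \<rho> $$ (i, j) * max_coh_vec d (\<lambda>i. 2*pi*real t*real i / real d) $ j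
      = \<rho> $$ (i,j) / D * c t i j"
      unfolding cnj_mult_rearr by simp
  qed
  have "(\<Sum>t<d. expval \<rho> (\<phi> t)) = (\<Sum>t<d. \<Sum>i<d. \<Sum>j<d. \<rho> $$ (i,j) / D * c t i j)" using e by simp
  also have "\<dots> = (\<Sum>i<d. \<Sum>t<d. \<Sum>j<d. \<rho> $$ (i,j) / D * c t i j)" by (rule sum.swap)
  also have "\<dots> = (\<Sum>i<d. \<Sum>j<d. \<Sum>t<d. \<rho> $$ (i,j) / D * c t i j)" by (rule sum.cong[OF refl]) (rule sum.swap)
  also have "\<dots> = (\<Sum>i<d. \<Sum>j<d. \<rho> $$ (i,j) / D * (\<Sum>t<d. c t i j))" by (simp add: sum_distrib_left)
  also have "\<dots> = (\<Sum>i<d. \<Sum>j<d. \<rho> $$ (i,j) / D * (if i = j then of_nat d else 0))"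
    unfolding c_def by (intro sum.cong refl) (simp add: inner_roots)
  also have "\<dots> = (\<Sum>i<d. \<rho> $$ (i,i) / D * of_nat d)"
    by (intro sum.cong refl) (simp add: if_distrib sum.delta sum.delta' cong: if_cong)
  also have "\<dots> = (\<Sum>i<d. \<rho> $$ (i,i))" using db(6) by (simp add: D_def)
  also have "\<dots> = 1" by (rule db(5))
  finally have s1: "(\<Sum>t<d. expval \<rho> (\<phi> t)) = 1" .
  have s2: "(\<Sum>t<d. Re (expval \<rho> (\<phi> t))) = 1" using s1 by (metis Re_sum one_complex.sel(1))
  have "\<exists>t<d. Re (expval \<rho> (\<phi> t)) \<ge> 1 / real d"
  proof (rule ccontr)
    assume "\<not> ?thesis"
    then have lt: "\<And>t. t \<in> {..<d} \<Longrightarrow> Re (expval \<rho> (\<phi> t)) < 1 / real d" by auto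
    have "(\<Sum>t<d. Re (expval \<rho> (\<phi> t))) < (\<Sum>t<d. 1 / real d)"
      by (rule sum_strict_mono[OF finite_lessThan _ lt]) (use db(6) in auto)
    then show False using s2 db(6) by simp
  qed
  then obtain t where "Re (expval \<rho> (\<phi> t)) \<ge> 1 / real d" by blast
  then show ?thesis using cf_ge[OF dens, of "\<lambda>i. 2*pi*real t*real i / real d"] \<phi>_def by simp
qed

lemma cf_incoh:
  assumes dens: "density_op d \<rho>" and inc: "incoherent d \<rho>"
  shows "coh_fraction d \<rho> = 1 / real d"
proof -
  note db = density_basic[OF dens]
  have val: "Re (expval \<rho> (max_coh_vec d \<theta>)) = 1 / real d" for \<theta>
  proof -
    define \<phi> where "\<phi> = max_coh_vec d \<theta>"
    have "expval \<rho> \<phi> = (\<Sum>i<d. \<Sum>j<d. cnj (\<phi>$i) * \<rho> $$ (i,j) * \<phi>$j)"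
      unfolding \<phi>_def by (rule expval_sum2[OF db(1) mcv_carrier])
    also have "\<dots> = (\<Sum>i<d. cnj (\<phi>$i) * \<rho> $$ (i,i) * \<phi>$i)"
    proof (rule sum.cong[OF refl])
      fix i assume i: "i \<in> {..<d}"
      have "(\<Sum>j<d. cnj (\<phi>$i) * \<rho> $$ (i,j) * \<phi>$j) = (\<Sum>j<d. if j = i then cnj (\<phi>$i) * \<rho> $$ (i,i) * \<phi>$i else 0)"
        by (rule sum.cong[OF refl]) (use inc i in \<open>auto simp: incoherent_def\<close>)
      then show "(\<Sum>j<d. cnj (\<phi>$i) * \<rho> $$ (i,j) * \<phi>$j) = cnj (\<phi>$i) * \<rho> $$ (i,i) * \<phi>$i"
        using i by simp
    qed
    also have "\<dots> = (\<Sum>i<d. \<rho> $$ (i,i) * complex_of_real (1 / real d))"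
      unfolding cnj_mult_rearr \<phi>_def by (intro sum.cong refl) (simp add: mcv_cnj_self db(6))
    also have "\<dots> = (\<Sum>i<d. \<rho> $$ (i,i)) * complex_of_real (1 / real d)" by (rule sum_distrib_right[symmetric])
    also have "\<dots> = complex_of_real (1 / real d)" using db(5) by simp
    finally show ?thesis unfolding \<phi>_def by simp
  qed
  have "(\<lambda>\<phi>. Re (expval \<rho> \<phi>)) ` max_coh_states d = {1 / real d}"
  proof
    show "(\<lambda>\<phi>. Re (expval \<rho> \<phi>)) ` max_coh_states d \<subseteq> {1 / real d}"
      using val by (auto simp: max_coh_states_def)
    have m: "max_coh_vec d (\<lambda>_. 0) \<in> max_coh_states d" by (simp add: max_coh_states_def)
    have "1 / real d \<in> (\<lambda>\<phi>. Re (expval \<rho> \<phi>)) ` max_coh_states d"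
      by (rule image_eqI[OF _ m]) (simp add: val)
    then show "{1 / real d} \<subseteq> (\<lambda>\<phi>. Re (expval \<rho> \<phi>)) ` max_coh_states d" by simp
  qed
  then show ?thesis unfolding coh_fraction_def by simp
qed

lemma cmod_diff_sq2: "(cmod (a - b))^2 = (cmod a)^2 - 2 * Re (cnj b * a) + (cmod b)^2"
  using cmod_diff_sq[of a 1 b] by simp

lemma frob_close:
  assumes dens: "density_op d \<rho>" and i: "i < d" and j: "j < d"
  shows "(cmod (\<rho> $$ (i,j) - max_coh_vec d \<theta> $ i * cnj (max_coh_vec d \<theta> $ j)))^2
    \<le> 2 - 2 * Re (expval \<rho> (max_coh_vec d \<theta>))"
proof -
  note db = density_basic[OF dens]
  note lf = lm_facts[OF dens]
  define \<phi> where "\<phi> = max_coh_vec d \<theta>"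
  define F where "F i j = (cmod (\<rho> $$ (i,j)))^2" for i j
  define G where "G i j = Re (cnj (\<phi> $ i * cnj (\<phi> $ j)) * \<rho> $$ (i,j))" for i j
  define H where "H i j = (cmod (\<phi> $ i * cnj (\<phi> $ j)))^2" for i j
  define E where "E i j = (cmod (\<rho> $$ (i,j) - \<phi> $ i * cnj (\<phi> $ j)))^2" for i j
  have "(\<Sum>i<d. \<Sum>j<d. E i j) = (\<Sum>i<d. \<Sum>j<d. F i j - 2 * G i j + H i j)"
    unfolding E_def F_def G_def H_def cmod_diff_sq2 ..
  also have "\<dots> = (\<Sum>i<d. \<Sum>j<d. F i j) - 2 * (\<Sum>i<d. \<Sum>j<d. G i j) + (\<Sum>i<d. \<Sum>j<d. H i j)"
    by (simp add: sum.distrib sum_subtractf sum_distrib_left)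
  also have "(\<Sum>i<d. \<Sum>j<d. G i j) = Re (expval \<rho> \<phi>)"
  proof -
    have "(\<Sum>i<d. \<Sum>j<d. G i j) = Re (\<Sum>i<d. \<Sum>j<d. cnj (\<phi>$i) * \<rho> $$ (i,j) * \<phi>$j)"
      unfolding G_def Re_sum by (intro sum.cong refl) (simp add: mult_ac)
    also have "\<dots> = Re (expval \<rho> \<phi>)" unfolding \<phi>_def expval_sum2[OF db(1) mcv_carrier] ..
    finally show ?thesis .
  qed
  also have "(\<Sum>i<d. \<Sum>j<d. H i j) = 1"
  proof -
    have "(\<Sum>i<d. \<Sum>j<d. H i j) = (\<Sum>i<d. \<Sum>j<d. (1 / real d) * (1 / real d))"
      unfolding H_def \<phi>_def by (intro sum.cong refl) (simp add: norm_mult power_mult_distrib mcv_cmod_sq db(6))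
    also have "\<dots> = 1" using db(6) by simp
    finally show ?thesis .
  qed
  finally have sE: "(\<Sum>i<d. \<Sum>j<d. E i j) \<le> 2 - 2 * Re (expval \<rho> \<phi>)"
    using lf(5) F_def by simp
  have "E i j \<le> (\<Sum>j<d. E i j)" by (rule member_le_sum) (use j in \<open>auto simp: E_def\<close>)
  also have "\<dots> \<le> (\<Sum>i<d. \<Sum>j<d. E i j)"
    by (rule member_le_sum[where f="\<lambda>i. \<Sum>j<d. E i j"]) (use i in \<open>auto simp: E_def intro: sum_nonneg\<close>)
  finally show ?thesis using sE unfolding E_def \<phi>_def by simp
qed

lemma approx_alg:
  fixes r b r0 b0 r1 b1 :: complex and D \<delta> :: real
  assumes "cmod (r - b) < \<delta>" "cmod (r0 - b0) < \<delta>" "cmod (r1 - b1) < \<delta>"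
    "b = complex_of_real D * b0 * cnj b1" "cmod b1 = 1 / D" "cmod r0 \<le> 1" "D > 0"
  shows "cmod (r - complex_of_real D * r0 * cnj r1) \<le> (2 + D) * \<delta>"
proof -
  have eq: "r - complex_of_real D * r0 * cnj r1 = (r - b) + complex_of_real D * ((b0 - r0) * cnj b1 + r0 * cnj (b1 - r1))"
    using assms(4) by (simp add: algebra_simps)
  have n1: "cmod ((b0 - r0) * cnj b1) \<le> \<delta> / D"
  proof -
    have "cmod ((b0 - r0) * cnj b1) = cmod (r0 - b0) * (1 / D)" using assms(5) by (simp add: norm_mult norm_minus_commute)
    also have "\<dots> \<le> \<delta> * (1 / D)" using assms(2,7) by (intro mult_right_mono) auto
    finally show ?thesis by simp
  qed
  have n2: "cmod (r0 * cnj (b1 - r1)) \<le> \<delta>"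
  proof -
    have c1: "cmod (cnj (b1 - r1)) = cmod (r1 - b1)" by (metis complex_mod_cnj norm_minus_commute)
    have "cmod (r0 * cnj (b1 - r1)) = cmod r0 * cmod (r1 - b1)" unfolding norm_mult c1 ..
    also have "\<dots> \<le> 1 * \<delta>" using assms(3,6) by (intro mult_mono) auto
    finally show ?thesis by simp
  qed
  have "cmod (r - complex_of_real D * r0 * cnj r1) \<le> cmod (r - b) + D * cmod ((b0 - r0) * cnj b1 + r0 * cnj (b1 - r1))"
    unfolding eq using assms(7) by (metis abs_of_pos norm_mult norm_of_real norm_triangle_ineq)
  also have "\<dots> \<le> \<delta> + D * (\<delta> / D + \<delta>)"
    using assms(1,7) n1 n2 norm_triangle_ineq[of "(b0 - r0) * cnj b1" "r0 * cnj (b1 - r1)"]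
    by (intro add_mono mult_left_mono) auto
  also have "\<dots> = (2 + D) * \<delta>" using assms(7) by (simp add: field_simps)
  finally show ?thesis .
qed

lemma zero_by_eps:
  fixes z :: complex and K :: real
  assumes "K > 0" "\<And>\<delta>. \<delta> > 0 \<Longrightarrow> cmod z \<le> K * \<delta>"
  shows "z = 0"
proof (rule ccontr)
  assume "z \<noteq> 0"
  then have "cmod z > 0" by simp
  then have "cmod z \<le> K * (cmod z / (2 * K))" using assms(1) assms(2)[of "cmod z / (2 * K)"] by simp
  also have "K * (cmod z / (2 * K)) = cmod z / 2" using assms(1) by (simp add: field_simps)
  finally show False using \<open>cmod z > 0\<close> by simp
qed

lemma eq_by_eps:
  fixes x y :: real
  assumes "\<And>\<delta>. \<delta> > 0 \<Longrightarrow> \<bar>x - y\<bar> < \<delta>"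
  shows "x = y"
proof (rule ccontr)
  assume "x \<noteq> y"
  then have "\<bar>x - y\<bar> > 0" by simp
  then show False using assms[of "\<bar>x - y\<bar>"] by simp
qed

lemma div_s_prod: "x / complex_of_real (sqrt (real d)) * cnj (y / complex_of_real (sqrt (real d)))
   = x * cnj y / complex_of_real (real d)"
proof -
  have 1: "cnj (y / complex_of_real (sqrt (real d))) = cnj y / complex_of_real (sqrt (real d))"
    unfolding complex_cnj_divide complex_cnj_complex_of_real ..
  have 2: "complex_of_real (sqrt (real d)) * complex_of_real (sqrt (real d)) = complex_of_real (real d)"
  proof -
    have "sqrt (real d) * sqrt (real d) = real d" by simp
    then show ?thesis unfolding of_real_mult[symmetric] by simp
  qed
  show ?thesis unfolding 1 times_divide_times_eq 2 ..
qed

lemma proj_index: "i < dim_vec \<phi> \<Longrightarrow> j < dim_vec \<phi> \<Longrightarrow> proj \<phi> $$ (i,j) = \<phi> $ i * cnj (\<phi> $ j)"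
  by (simp add: proj_def)

lemma proj_imp_cf1:
  assumes dens: "density_op d \<rho>" and r: "\<rho> = proj (max_coh_vec d \<theta>)"
  shows "coh_fraction d \<rho> = 1"
proof -
  note db = density_basic[OF dens]
  define \<phi> where "\<phi> = max_coh_vec d \<theta>"
  have "expval \<rho> \<phi> = (\<Sum>i<d. \<Sum>j<d. cnj (\<phi>$i) * \<rho> $$ (i,j) * \<phi>$j)"
    unfolding \<phi>_def by (rule expval_sum2[OF db(1) mcv_carrier])
  also have "\<dots> = (\<Sum>i<d. \<Sum>j<d. complex_of_real (1 / real d) * complex_of_real (1 / real d))"
  proof (intro sum.cong refl)
    fix i j assume "i \<in> {..<d}" "j \<in> {..<d}"
    then have i: "i < d" and j: "j < d" by auto
    have "\<rho> $$ (i,j) = \<phi>$i * cnj (\<phi>$j)" unfolding r \<phi>_def by (rule proj_index) (use i j in \<open>simp_all add: max_coh_vec_def\<close>)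
    then have "cnj (\<phi>$i) * \<rho> $$ (i,j) * \<phi>$j = (cnj (\<phi>$i) * \<phi>$i) * (cnj (\<phi>$j) * \<phi>$j)" by (simp add: mult_ac)
    also have "\<dots> = complex_of_real (1 / real d) * complex_of_real (1 / real d)"
      unfolding \<phi>_def using i j db(6) by (simp only: mcv_cnj_self)
    finally show "cnj (\<phi>$i) * \<rho> $$ (i,j) * \<phi>$j = complex_of_real (1 / real d) * complex_of_real (1 / real d)" .
  qed
  also have "\<dots> = 1" using db(6) by simp
  finally have e1: "Re (expval \<rho> \<phi>) = 1" by simp
  have "1 \<le> coh_fraction d \<rho>" using cf_ge[OF dens, of \<theta>] e1 \<phi>_def by simp
  moreover have "coh_fraction d \<rho> \<le> 1" using cf_upper[OF dens] lm_facts(4)[OF dens] by simp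
  ultimately show ?thesis by simp
qed

lemma cf1_imp_proj:
  assumes dens: "density_op d \<rho>" and cf1: "coh_fraction d \<rho> = 1"
  shows "\<exists>\<phi>\<in>max_coh_states d. \<rho> = proj \<phi>"
proof -
  note db = density_basic[OF dens]
  note lf = lm_facts[OF dens]
  define D where "D = complex_of_real (real d)"
  define b where "b \<theta> i j = max_coh_vec d \<theta> $ i * cnj (max_coh_vec d \<theta> $ j)" for \<theta> i j
  have ne: "max_coh_states d \<noteq> {}" by (simp add: max_coh_states_def)
  have near: "\<exists>\<theta>. \<forall>i<d. \<forall>j<d. cmod (\<rho> $$ (i,j) - b \<theta> i j) < \<delta>" if dp: "\<delta> > 0" for \<delta>
  proof -
    have "1 - \<delta>^2/2 < coh_fraction d \<rho>" using cf1 dp by simp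
    then obtain \<phi> where \<phi>: "\<phi> \<in> max_coh_states d" "1 - \<delta>^2/2 < Re (expval \<rho> \<phi>)"
      using less_cSUP_iff[OF ne cf_bdd[OF dens]] unfolding coh_fraction_def by blast
    then obtain \<theta> where th: "\<phi> = max_coh_vec d \<theta>" by (auto simp: max_coh_states_def)
    have "cmod (\<rho> $$ (i,j) - b \<theta> i j) < \<delta>" if ij: "i < d" "j < d" for i j
    proof -
      have "(cmod (\<rho> $$ (i,j) - b \<theta> i j))^2 \<le> 2 - 2 * Re (expval \<rho> (max_coh_vec d \<theta>))"
        unfolding b_def by (rule frob_close[OF dens ij])
      also have "\<dots> < \<delta>^2" using \<phi>(2) th by simp
      finally show ?thesis by (rule power2_less_imp_less) (use dp in simp)
    qed
    then show ?thesis by blast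
  qed
  have bprop: "b \<theta> i j = D * b \<theta> i 0 * cnj (b \<theta> j 0)" "cmod (b \<theta> j 0) = 1 / real d"
    if ij: "i < d" "j < d" for \<theta> i j
  proof -
    define \<phi> where "\<phi> = max_coh_vec d \<theta>"
    have c0: "cnj (\<phi>$0) * \<phi>$0 = complex_of_real (1 / real d)" unfolding \<phi>_def by (rule mcv_cnj_self[OF db(6) db(6)])
    have "D * b \<theta> i 0 * cnj (b \<theta> j 0) = D * (\<phi>$i * cnj (\<phi>$j)) * (cnj (\<phi>$0) * \<phi>$0)"
      unfolding b_def \<phi>_def by (simp add: mult_ac)
    also have "\<dots> = \<phi>$i * cnj (\<phi>$j)" unfolding c0 D_def using db(6) by simp
    finally show "b \<theta> i j = D * b \<theta> i 0 * cnj (b \<theta> j 0)" unfolding b_def \<phi>_def by simp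
    show "cmod (b \<theta> j 0) = 1 / real d" unfolding b_def using ij db(6)
      by (simp add: norm_mult mcv_cmod)
  qed
  have r0b: "cmod (\<rho> $$ (i,0)) \<le> 1" if i: "i < d" for i
  proof -
    have "(cmod (\<rho> $$ (i,0)))^2 \<le> (\<Sum>j<d. (cmod (\<rho> $$ (i,j)))^2)"
      by (rule member_le_sum[where f="\<lambda>j. (cmod (\<rho> $$ (i,j)))^2"]) (use db(6) in auto)
    also have "\<dots> \<le> (\<Sum>i<d. \<Sum>j<d. (cmod (\<rho> $$ (i,j)))^2)"
      by (rule member_le_sum[where f="\<lambda>i. \<Sum>j<d. (cmod (\<rho> $$ (i,j)))^2"]) (use i in \<open>auto intro: sum_nonneg\<close>)
    also have "\<dots> \<le> 1" by (rule lf(5))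
    finally have "(cmod (\<rho> $$ (i,0)))^2 \<le> 1^2" by simp
    then show ?thesis by (rule power2_le_imp_le) simp
  qed
  have key1: "\<rho> $$ (i,j) = D * \<rho> $$ (i,0) * cnj (\<rho> $$ (j,0))" if ij: "i < d" "j < d" for i j
  proof -
    have "\<rho> $$ (i,j) - D * \<rho> $$ (i,0) * cnj (\<rho> $$ (j,0)) = 0"
    proof (rule zero_by_eps[of "2 + real d"])
      show "2 + real d > 0" by simp
      fix \<delta> :: real assume dp: "\<delta> > 0"
      obtain \<theta> where th: "\<forall>i<d. \<forall>j<d. cmod (\<rho> $$ (i,j) - b \<theta> i j) < \<delta>" using near[OF dp] by blast
      have t1: "cmod (\<rho> $$ (i,j) - b \<theta> i j) < \<delta>" using th ij by blast
      have t2: "cmod (\<rho> $$ (i,0) - b \<theta> i 0) < \<delta>" using th ij db(6) by blast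
      have t3: "cmod (\<rho> $$ (j,0) - b \<theta> j 0) < \<delta>" using th ij db(6) by blast
      show "cmod (\<rho> $$ (i,j) - D * \<rho> $$ (i,0) * cnj (\<rho> $$ (j,0))) \<le> (2 + real d) * \<delta>"
        unfolding D_def
        by (rule approx_alg[OF t1 t2 t3 bprop(1)[OF ij, unfolded D_def] bprop(2)[OF ij] r0b[OF ij(1)]])
           (use db(6) in simp)
    qed
    then show ?thesis by simp
  qed
  have key2: "cmod (\<rho> $$ (i,0)) = 1 / real d" if i: "i < d" for i
  proof (rule eq_by_eps)
    fix \<delta> :: real assume dp: "\<delta> > 0"
    obtain \<theta> where th: "\<forall>i<d. \<forall>j<d. cmod (\<rho> $$ (i,j) - b \<theta> i j) < \<delta>" using near[OF dp] by blast
    have "\<bar>cmod (\<rho> $$ (i,0)) - cmod (b \<theta> i 0)\<bar> \<le> cmod (\<rho> $$ (i,0) - b \<theta> i 0)" by (rule norm_triangle_ineq3)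
    also have "\<dots> < \<delta>" using th i db(6) by auto
    finally show "\<bar>cmod (\<rho> $$ (i,0)) - 1 / real d\<bar> < \<delta>" using bprop(2)[OF i i] by simp
  qed
  define \<theta>' where "\<theta>' i = Arg (\<rho> $$ (i,0))" for i
  have r0: "\<rho> $$ (i,0) = complex_of_real (1 / real d) * cis (\<theta>' i)" if i: "i < d" for i
    using rcis_cmod_Arg[of "\<rho> $$ (i,0)"] key2[OF i] unfolding rcis_def \<theta>'_def by simp
  have "\<rho> = proj (max_coh_vec d \<theta>')"
  proof (rule eq_matI)
    show "dim_row \<rho> = dim_row (proj (max_coh_vec d \<theta>'))" "dim_col \<rho> = dim_col (proj (max_coh_vec d \<theta>'))"
      using db(1) by (auto simp: proj_def max_coh_vec_def)
    fix i j assume "i < dim_row (proj (max_coh_vec d \<theta>'))" "j < dim_col (proj (max_coh_vec d \<theta>'))"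
    then have i: "i < d" and j: "j < d" by (auto simp: proj_def max_coh_vec_def)
    have "\<rho> $$ (i,j) = D * (complex_of_real (1 / real d) * cis (\<theta>' i)) * cnj (complex_of_real (1 / real d) * cis (\<theta>' j))"
      using key1[OF i j] r0[OF i] r0[OF j] by simp
    also have "\<dots> = cis (\<theta>' i) * cnj (cis (\<theta>' j)) / complex_of_real (real d)"
      unfolding D_def using db(6) by (simp add: field_simps)
    also have "\<dots> = max_coh_vec d \<theta>' $ i * cnj (max_coh_vec d \<theta>' $ j)"
      unfolding mcv_index[OF i] mcv_index[OF j] by (rule div_s_prod[symmetric])
    also have "\<dots> = proj (max_coh_vec d \<theta>') $$ (i,j)" using i j by (simp add: proj_index max_coh_vec_def)
    finally show "\<rho> $$ (i,j) = proj (max_coh_vec d \<theta>') $$ (i,j)" .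
  qed
  then show ?thesis by (auto simp: max_coh_states_def)
qed

theorem mainTheorem4:
  fixes d :: nat and \<rho> :: "complex mat"
  assumes "density_op d \<rho>"
  shows "1 / real d \<le> coh_fraction d \<rho> \<and> coh_fraction d \<rho> \<le> lambda_max \<rho> \<and> lambda_max \<rho> \<le> 1
    \<and> (coh_fraction d \<rho> = 1 \<longleftrightarrow> (\<exists>\<phi> \<in> max_coh_states d. \<rho> = proj \<phi>))
    \<and> (incoherent d \<rho> \<longrightarrow> coh_fraction d \<rho> = 1 / real d)"
proof (intro conjI impI)
  show "1 / real d \<le> coh_fraction d \<rho>" by (rule cf_lower[OF assms])
  show "coh_fraction d \<rho> \<le> lambda_max \<rho>" by (rule cf_upper[OF assms])
  show "lambda_max \<rho> \<le> 1" by (rule lm_facts(4)[OF assms])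
  show "coh_fraction d \<rho> = 1 \<longleftrightarrow> (\<exists>\<phi> \<in> max_coh_states d. \<rho> = proj \<phi>)"
  proof
    assume "coh_fraction d \<rho> = 1"
    then show "\<exists>\<phi> \<in> max_coh_states d. \<rho> = proj \<phi>" by (rule cf1_imp_proj[OF assms])
  next
    assume "\<exists>\<phi> \<in> max_coh_states d. \<rho> = proj \<phi>"
    then obtain \<theta> where "\<rho> = proj (max_coh_vec d \<theta>)" by (auto simp: max_coh_states_def)
    then show "coh_fraction d \<rho> = 1" by (rule proj_imp_cf1[OF assms])
  qed
  show "incoherent d \<rho> \<Longrightarrow> coh_fraction d \<rho> = 1 / real d" by (rule cf_incoh[OF assms])
qed

end
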